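(* Let $\mathbf{X},\mathbf{Y},\mathbf{Z}$ be Banach spaces, and let $\mathcal{S}_{\mathbf{X}}\subset\mathbf{X}$, $\mathcal{S}_{\mathbf{Y}}\subset\mathbf{Y}$, $\mathcal{S}\subset\mathbf{Z}$. Assume that 1. $s^\ast_{\mathbf{X}}(\mathcal{S}_{\mathbf{X}})=s^\ast_{\mathbf{Y}}(\mathcal{S}_{\mathbf{Y}})$; 2. there exists a Lipschitz continuous map $\Phi:\mathcal{S}_{\mathbf{X}}\to\mathbf{Z}$ with $\Phi(\mathcal{S}_{\mathbf{X}})\supset\mathcal{S}$; 3. there exists a Borel probability measure $\mathbb{P}$ on $\mathcal{S}_{\mathbf{Y}}$ that is critical for $\mathcal{S}_{\mathbf{Y}}$ with respect to $\mathbf{Y}$; 4. there exists a measurable map $\Psi:\mathcal{S}_{\mathbf{Y}}\to\mathcal{S}$ and $\kappa>0$ with $\|\Psi(\mathbf{x})-\Psi(\mathbf{x}')\|_{\mathbf{Z}}\ge\kappa\|\mathbf{x}-\mathbf{x}'\|_{\mathbf{Y}}$ for all $\mathbf{x},\mathbf{x}'\in\mathcal{S}_{\mathbf{Y}}$. Then $s^\ast_{\mathbf{Z}}(\mathcal{S})=s^\ast_{\mathbf{X}}(\mathcal{S}_{\mathbf{X}})$, and the push-forward measure $\mathbb{P}\circ\Psi^{-1}$ is a Borel probability measure on $\mathcal{S}$ that is critical for $\mathcal{S}$ with respect to $\mathbf{Z}$.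
   Context: For a real Banach space $\mathbf{X}$ and $\mathcal{S}\subset\mathbf{X}$: a codec is a sequence $((E_R,D_R))_{R\in\mathbb{N}}$ of maps $E_R:\mathcal{S}\to\{0,1\}^R$, $D_R:\{0,1\}^R\to\mathbf{X}$; distortion $\delta_{\mathcal{S},\mathbf{X}}(E_R,D_R)=\sup_{\mathbf{x}\in\mathcal{S}}\|\mathbf{x}-D_R(E_R(\mathbf{x}))\|_{\mathbf{X}}$; optimal compression rate $s^\ast_{\mathbf{X}}(\mathcal{S})=\sup\{s\ge0:\exists\text{ codec with }\sup_RR^s\delta_{\mathcal{S},\mathbf{X}}(E_R,D_R)<\infty\}$. Subsets are equipped with the trace of the Borel $\sigma$-algebra of the ambient space (this also defines measurability of $\Psi$). A Borel probability measure $\mathbb{P}$ on $\mathcal{S}$ has (logarithmic) growth order $s_0\in[0,\infty)$ w.r.t. $\mathbf{X}$ if for every $s>s_0$ there exist $\varepsilon_0,c>0$ with $\mathbb{P}(\mathcal{S}\cap\mathcal{B}(\mathbf{x},\varepsilon;\mathbf{X}))\le2^{-c\varepsilon^{-1/s}}$ for all $\mathbf{x}\in\mathbf{X}$, $\varepsilon\in(0,\varepsilon_0)$ (closed balls); it is critical for $\mathcal{S}$ w.r.t. $\mathbf{X}$ if it has growth order $s^\ast_{\mathbf{X}}(\mathcal{S})$. *)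

theory Defs
  imports "HOL-Probability.Probability"
begin

text \<open>Distortion of an encoder/decoder pair on S (value in the extended reals;
  the supremum over the empty set is -infinity).\<close>
definition distortion :: "'a::real_normed_vector set \<Rightarrow> ('a \<Rightarrow> bool list) \<Rightarrow> (bool list \<Rightarrow> 'a) \<Rightarrow> ereal" where
  "distortion S E D = (SUP x\<in>S. ereal (norm (x - D (E x))))"

definition is_codec :: "'a set \<Rightarrow> (nat \<Rightarrow> 'a \<Rightarrow> bool list) \<Rightarrow> (nat \<Rightarrow> bool list \<Rightarrow> 'a) \<Rightarrow> bool" where
  "is_codec S E D \<longleftrightarrow> (\<forall>R\<ge>1. \<forall>x\<in>S. length (E R x) = R)"

definition opt_rate :: "'a::real_normed_vector set \<Rightarrow> ereal" where
  "opt_rate S = Sup {ereal s | s. s \<ge> 0 \<and> (\<exists>E D. is_codec S E D \<and>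
       (SUP R\<in>{1::nat..}. ereal (real R powr s) * distortion S (E R) (D R)) < \<infinity>)}"

definition borel_prob_on :: "'a::topological_space set \<Rightarrow> 'a measure \<Rightarrow> bool" where
  "borel_prob_on S P \<longleftrightarrow> prob_space P \<and> sets P = sets (restrict_space borel S)"

definition growth_order :: "'a::real_normed_vector set \<Rightarrow> 'a measure \<Rightarrow> real \<Rightarrow> bool" where
  "growth_order S P s0 \<longleftrightarrow> s0 \<ge> 0 \<and>
     (\<forall>s>s0. \<exists>\<epsilon>0>0. \<exists>c>0. \<forall>x. \<forall>\<epsilon>. 0 < \<epsilon> \<and> \<epsilon> < \<epsilon>0 \<longrightarrow>
        measure P (S \<inter> cball x \<epsilon>) \<le> 2 powr (- c * \<epsilon> powr (- 1 / s)))"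

definition critical :: "'a::real_normed_vector set \<Rightarrow> 'a measure \<Rightarrow> bool" where
  "critical S P \<longleftrightarrow> (\<exists>s0. opt_rate S = ereal s0 \<and> growth_order S P s0)"

end

theory Submission
  imports Defs "HOL-Real_Asymp.Real_Asymp"
begin

lemma ev1: fixes C e0 s :: real assumes "s > 0" "e0 > 0"
  shows "eventually (\<lambda>R::nat. C * real R powr (-s) < e0) sequentially"
proof -
  have "((\<lambda>R::nat. real R powr (-s)) \<longlongrightarrow> 0) sequentially"
    by (rule tendsto_neg_powr) (use assms in \<open>auto intro: filterlim_real_sequentially\<close>)
  then have "((\<lambda>R::nat. C * real R powr (-s)) \<longlongrightarrow> C * 0) sequentially"
    by (intro tendsto_mult tendsto_const)
  then show ?thesis using assms(2) by (simp add: order_tendsto_iff)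
qed

lemma ev2: fixes b k :: real assumes "b > 0"
  shows "eventually (\<lambda>R::nat. real R powr b > k) sequentially"
proof -
  have "filterlim (\<lambda>R::nat. real R powr b) at_top sequentially"
    by (rule filterlim_compose[OF real_powr_at_top filterlim_real_sequentially]) (use assms in auto)
  then show ?thesis by (simp add: filterlim_at_top_dense)
qed

lemma codec_bound:
  fixes S :: "'a::real_normed_vector set"
  assumes "S \<noteq> {}" "(SUP R\<in>{1::nat..}. ereal (real R powr s) * distortion S (E R) (D R)) < \<infinity>"
  shows "\<exists>m. \<forall>R\<ge>1. \<forall>x\<in>S. real R powr s * norm (x - D R (E R x)) \<le> m"
proof -
  define M where "M = (SUP R\<in>{1::nat..}. ereal (real R powr s) * distortion S (E R) (D R))"
  have le: "ereal (real R powr s * norm (x - D R (E R x))) \<le> M" if "R \<ge> 1" "x \<in> S" for R x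
  proof -
    have "ereal (norm (x - D R (E R x))) \<le> distortion S (E R) (D R)"
      unfolding distortion_def using that(2) by (rule SUP_upper)
    then have "ereal (real R powr s) * ereal (norm (x - D R (E R x))) \<le> ereal (real R powr s) * distortion S (E R) (D R)"
      by (rule ereal_mult_left_mono) simp
    also have "\<dots> \<le> M" unfolding M_def using that(1) by (intro SUP_upper) auto
    finally show ?thesis by simp
  qed
  obtain x where "x \<in> S" using assms(1) by blast
  with le[of 1 x] have "M \<noteq> -\<infinity>" by auto
  moreover have "M \<noteq> \<infinity>" using assms(2) M_def by simp
  ultimately obtain m where "M = ereal m" by (cases M) auto
  with le show ?thesis by auto
qed

lemma opt_rate_le:
  fixes S :: "'a::real_normed_vector set"
  assumes bp: "borel_prob_on S P" and go: "growth_order S P s0"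
  shows "opt_rate S \<le> ereal s0"
  unfolding opt_rate_def
proof (rule Sup_least)
  fix y assume "y \<in> {ereal s |s. 0 \<le> s \<and> (\<exists>E D. is_codec S E D \<and> (SUP R\<in>{1::nat..}. ereal (real R powr s) * distortion S (E R) (D R)) < \<infinity>)}"
  then obtain s E D where y: "y = ereal s" and s0': "0 \<le> s" and cod: "is_codec S E D"
     and fin: "(SUP R\<in>{1::nat..}. ereal (real R powr s) * distortion S (E R) (D R)) < \<infinity>" by blast
  have ps: "prob_space P" and sets: "sets P = sets (restrict_space borel S)"
    using bp unfolding borel_prob_on_def by auto
  interpret prob_space P by (rule ps)
  have spP: "space P = S" using sets_eq_imp_space_eq[OF sets] by (simp add: space_restrict_space)
  have "S \<noteq> {}" using not_empty spP by simp
  have s0nn: "0 \<le> s0" using go unfolding growth_order_def by simp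
  show "y \<le> ereal s0"
  proof (rule ccontr)
    assume "\<not> y \<le> ereal s0"
    then have ss: "s0 < s" using y by simp
    define s' where "s' = (s + s0) / 2"
    have s'1: "s0 < s'" "s' < s" "0 < s'" using ss s0nn by (auto simp: s'_def)
    obtain e0 c where e0: "e0 > 0" and c: "c > 0"
      and gb: "\<And>x e. 0 < e \<Longrightarrow> e < e0 \<Longrightarrow> measure P (S \<inter> cball x e) \<le> 2 powr (- c * e powr (- 1 / s'))"
      using go s'1(1) unfolding growth_order_def by blast
    obtain m where m: "\<And>R x. R \<ge> 1 \<Longrightarrow> x \<in> S \<Longrightarrow> real R powr s * norm (x - D R (E R x)) \<le> m"
      using codec_bound[OF \<open>S \<noteq> {}\<close> fin] by blast
    define C where "C = abs m + 1"
    have C: "C > 0" by (simp add: C_def)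
    define a where "a = s / s'"
    have a1: "a > 1" using s'1 by (simp add: a_def)
    define k where "k = c * C powr (-1/s')"
    have k: "k > 0" using c C by (simp add: k_def)
    have "eventually (\<lambda>R::nat. C * real R powr (-s) < e0 \<and> real R powr (a - 1) > 1/k \<and> R \<ge> 1) sequentially"
      by (intro eventually_conj ev1 ev2 eventually_ge_at_top) (use s'1 e0 a1 in auto)
    then obtain N where "\<forall>n\<ge>N. C * real n powr (-s) < e0 \<and> real n powr (a - 1) > 1/k \<and> n \<ge> 1"
      unfolding eventually_sequentially by blast
    then obtain R :: nat where R1: "R \<ge> 1" and Re: "C * real R powr (-s) < e0" and Ra: "real R powr (a - 1) > 1/k"
      by blast
    define e where "e = C * real R powr (-s)"
    have epos: "e > 0" using C R1 by (simp add: e_def)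
    have cover: "norm (x - D R (E R x)) \<le> e" if "x \<in> S" for x
    proof -
      have "real R powr s * norm (x - D R (E R x)) \<le> C" using m[OF R1 that] by (simp add: C_def)
      moreover have "real R powr s > 0" using R1 by simp
      ultimately have "norm (x - D R (E R x)) \<le> C / real R powr s" by (simp add: field_simps mult.commute)
      also have "\<dots> = e" by (simp add: e_def powr_minus divide_inverse)
      finally show ?thesis .
    qed
    define L where "L = {xs::bool list. set xs \<subseteq> UNIV \<and> length xs = R}"
    have finL: "finite L" unfolding L_def by (rule finite_lists_length_eq) simp
    have cardL: "card L = 2 ^ R" unfolding L_def using card_lists_length_eq[of "UNIV :: bool set" R] by simp
    have Sc: "S \<subseteq> (\<Union>w\<in>L. S \<inter> cball (D R w) e)"
    proof
      fix x assume x: "x \<in> S"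
      have "E R x \<in> L" using cod R1 x unfolding is_codec_def L_def by auto
      moreover have "x \<in> cball (D R (E R x)) e" using cover[OF x] by (simp add: dist_norm norm_minus_commute)
      ultimately show "x \<in> (\<Union>w\<in>L. S \<inter> cball (D R w) e)" using x by blast
    qed
    have meas: "S \<inter> cball y e \<in> sets P" for y
      unfolding sets sets_restrict_space by (rule image_eqI[where x="cball y e"]) auto
    have "1 = measure P S" using prob_space spP by simp
    also have "\<dots> \<le> measure P (\<Union>w\<in>L. S \<inter> cball (D R w) e)"
      by (rule finite_measure_mono[OF Sc], rule sets.finite_UN) (use finL meas in auto)
    also have "\<dots> \<le> (\<Sum>w\<in>L. measure P (S \<inter> cball (D R w) e))"
      by (rule finite_measure_subadditive_finite[OF finL]) (use meas in auto)
    also have "\<dots> \<le> real (card L) * 2 powr (- c * e powr (- 1 / s'))"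
      by (rule sum_bounded_above) (rule gb[OF epos], use Re e_def in simp)
    also have "\<dots> = 2 powr (real R - k * real R powr a)"
    proof -
      have "e powr (- 1 / s') = C powr (-1/s') * (real R powr (-s)) powr (-1/s')"
        unfolding e_def using C by (simp add: powr_mult)
      also have "\<dots> = C powr (-1/s') * real R powr a"
        by (simp add: powr_powr a_def)
      finally have "e powr (- 1 / s') = C powr (-1/s') * real R powr a" .
      then have "- c * e powr (- 1 / s') = - k * real R powr a" by (simp add: k_def)
      moreover have "real (card L) = 2 powr real R" by (simp add: cardL powr_realpow)
      ultimately show ?thesis by (simp add: powr_add[symmetric])
    qed
    also have "\<dots> < 1"
    proof -
      have Rp: "real R > 0" using R1 by simp
      have "real R powr a = real R * real R powr (a - 1)"
      proof -
        have "real R powr a = real R powr (1 + (a - 1))" by simp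
        also have "\<dots> = real R powr 1 * real R powr (a - 1)" by (rule powr_add)
        finally show ?thesis using Rp by simp
      qed
      moreover have "k * real R powr (a - 1) > 1" using Ra k by (simp add: field_simps)
      ultimately have "k * real R powr a > real R" using Rp
        by (metis mult.left_commute mult.right_neutral mult_strict_left_mono)
      then have "2 powr (real R - k * real R powr a) < 2 powr 0"
        by (intro powr_less_mono) auto
      then show ?thesis by simp
    qed
    finally show False by simp
  qed
qed

lemma opt_rate_mono_lip:
  fixes SX :: "'a::real_normed_vector set" and S :: "'c::real_normed_vector set"
    and \<Phi> :: "'a \<Rightarrow> 'c"
  assumes lip: "\<exists>C. C-lipschitz_on SX \<Phi>" and img: "S \<subseteq> \<Phi> ` SX" and Sne: "S \<noteq> {}"
  shows "opt_rate SX \<le> opt_rate S"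
  unfolding opt_rate_def
proof (rule Sup_subset_mono, rule subsetI)
  fix y assume "y \<in> {ereal s |s. 0 \<le> s \<and> (\<exists>E D. is_codec SX E D \<and> (SUP R\<in>{1::nat..}. ereal (real R powr s) * distortion SX (E R) (D R)) < \<infinity>)}"
  then obtain s E D where y: "y = ereal s" and s0: "0 \<le> s" and cod: "is_codec SX E D"
     and fin: "(SUP R\<in>{1::nat..}. ereal (real R powr s) * distortion SX (E R) (D R)) < \<infinity>" by blast
  obtain L where L: "L-lipschitz_on SX \<Phi>" using lip by blast
  have L0: "0 \<le> L" using lipschitz_on_nonneg[OF L] .
  have SXne: "SX \<noteq> {}" using img Sne by blast
  obtain m where m: "\<And>R x. R \<ge> 1 \<Longrightarrow> x \<in> SX \<Longrightarrow> real R powr s * norm (x - D R (E R x)) \<le> m"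
    using codec_bound[OF SXne fin] by blast
  define pick where "pick z = (SOME x. x \<in> SX \<and> \<Phi> x = z)" for z
  define E' where "E' R z = E R (pick z)" for R z
  define D' where "D' R w = \<Phi> (SOME x. x \<in> SX \<and> E R x = w)" for R w
  have pick: "pick z \<in> SX \<and> \<Phi> (pick z) = z" if "z \<in> S" for z
    unfolding pick_def by (rule someI_ex) (use that img in blast)
  have cod': "is_codec S E' D'" using cod pick unfolding is_codec_def E'_def by auto
  have bnd: "ereal (real R powr s) * distortion S (E' R) (D' R) \<le> ereal (2 * L * m)" if R: "R \<ge> 1" for R
  proof -
    have Rpos: "real R powr s > 0" using R by simp
    have pt: "norm (z - D' R (E' R z)) \<le> 2 * L * m / real R powr s" if z: "z \<in> S" for z
    proof -
      define x where "x = pick z"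
      have x: "x \<in> SX" "\<Phi> x = z" using pick[OF z] x_def by auto
      define x' where "x' = (SOME x'. x' \<in> SX \<and> E R x' = E R x)"
      have "x' \<in> SX \<and> E R x' = E R x" unfolding x'_def by (rule someI_ex) (use x in blast)
      then have x': "x' \<in> SX" "E R x' = E R x" by auto
      have D'eq: "D' R (E' R z) = \<Phi> x'" unfolding D'_def E'_def x'_def x_def by simp
      have mx: "norm (x - D R (E R x)) \<le> m / real R powr s"
        using m[OF R x(1)] Rpos by (simp add: field_simps mult.commute)
      have mx': "norm (x' - D R (E R x)) \<le> m / real R powr s"
        using m[OF R x'(1)] Rpos x'(2) by (simp add: field_simps mult.commute)
      have "norm (z - D' R (E' R z)) = dist (\<Phi> x) (\<Phi> x')" using D'eq x by (simp add: dist_norm)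
      also have "\<dots> \<le> L * dist x x'" by (rule lipschitz_onD[OF L x(1) x'(1)])
      also have "dist x x' \<le> norm (x - D R (E R x)) + norm (x' - D R (E R x))"
        unfolding dist_norm using norm_triangle_ineq4[of "x - D R (E R x)" "x' - D R (E R x)"] by simp
      then have "L * dist x x' \<le> L * (m / real R powr s + m / real R powr s)"
        using mx mx' L0 by (intro mult_left_mono) auto
      finally show ?thesis by (simp add: mult.assoc mult.left_commute)
    qed
    then have "distortion S (E' R) (D' R) \<le> ereal (2*L*m / real R powr s)"
      unfolding distortion_def by (intro SUP_least) simp
    then have "ereal (real R powr s) * distortion S (E' R) (D' R) \<le> ereal (real R powr s) * ereal (2*L*m / real R powr s)"
      by (rule ereal_mult_left_mono) simp
    also have "\<dots> = ereal (2*L*m)" using Rpos by simp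
    finally show ?thesis .
  qed
  have "(SUP R\<in>{1::nat..}. ereal (real R powr s) * distortion S (E' R) (D' R)) \<le> ereal (2*L*m)"
    by (intro SUP_least) (use bnd in auto)
  then have "(SUP R\<in>{1::nat..}. ereal (real R powr s) * distortion S (E' R) (D' R)) < \<infinity>"
    using order.strict_trans1 by fastforce
  then show "y \<in> {ereal s |s. 0 \<le> s \<and> (\<exists>E D. is_codec S E D \<and> (SUP R\<in>{1::nat..}. ereal (real R powr s) * distortion S (E R) (D R)) < \<infinity>)}"
    using y s0 cod' by blast
qed

theorem theorem2p6:
  fixes SX :: "'a::banach set" and SY :: "'b::banach set" and S :: "'c::banach set"
    and \<Phi> :: "'a \<Rightarrow> 'c" and P :: "'b measure" and \<Psi> :: "'b \<Rightarrow> 'c" and \<kappa> :: real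
  assumes rates: "opt_rate SX = opt_rate SY"
    and Phi_lip: "\<exists>C. C-lipschitz_on SX \<Phi>"
    and Phi_img: "S \<subseteq> \<Phi> ` SX"
    and P_borel: "borel_prob_on SY P"
    and P_crit: "critical SY P"
    and Psi_meas: "\<Psi> \<in> restrict_space borel SY \<rightarrow>\<^sub>M restrict_space borel S"
    and kappa: "\<kappa> > 0"
    and Psi_exp: "\<forall>x\<in>SY. \<forall>x'\<in>SY. norm (\<Psi> x - \<Psi> x') \<ge> \<kappa> * norm (x - x')"
  shows "opt_rate S = opt_rate SX
    \<and> borel_prob_on S (distr P (restrict_space borel S) \<Psi>)
    \<and> critical S (distr P (restrict_space borel S) \<Psi>)"
proof -
  obtain s0 where s0: "opt_rate SY = ereal s0" and goY: "growth_order SY P s0"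
    using P_crit unfolding critical_def by blast
  have psP: "prob_space P" and setsP: "sets P = sets (restrict_space borel SY)"
    using P_borel unfolding borel_prob_on_def by auto
  interpret P: prob_space P by (rule psP)
  have spP: "space P = SY" using sets_eq_imp_space_eq[OF setsP] by (simp add: space_restrict_space)
  have SYne: "SY \<noteq> {}" using P.not_empty spP by simp
  have PsiM: "\<Psi> \<in> P \<rightarrow>\<^sub>M restrict_space borel S"
    using Psi_meas measurable_cong_sets[OF setsP refl] by blast
  have PsiS: "\<Psi> x \<in> S" if "x \<in> SY" for x
    using measurable_space[OF Psi_meas] that by (simp add: space_restrict_space)
  have Sne: "S \<noteq> {}" using SYne PsiS by blast
  define Q where "Q = distr P (restrict_space borel S) \<Psi>"
  have bpQ: "borel_prob_on S Q"
    unfolding borel_prob_on_def Q_def using P.prob_space_distr[OF PsiM] by simp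
  have s0nn: "0 \<le> s0" using goY unfolding growth_order_def by simp
  have goQ: "growth_order S Q s0"
    unfolding growth_order_def
  proof (intro conjI allI impI)
    show "0 \<le> s0" by (rule s0nn)
    fix s assume ss: "s0 < s"
    then obtain e0 c where e0: "e0 > 0" and c: "c > 0"
      and gb: "\<And>x e. 0 < e \<Longrightarrow> e < e0 \<Longrightarrow> measure P (SY \<inter> cball x e) \<le> 2 powr (- c * e powr (- 1 / s))"
      using goY unfolding growth_order_def by blast
    define c' where "c' = c * (2/\<kappa>) powr (-1/s)"
    show "\<exists>e0>0. \<exists>c>0. \<forall>x e. 0 < e \<and> e < e0 \<longrightarrow> measure Q (S \<inter> cball x e) \<le> 2 powr (- c * e powr (- 1 / s))"
    proof -
    have p1: "0 < e0*\<kappa>/2" using e0 kappa by simp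
    have p2: "0 < c'" using c kappa by (simp add: c'_def)
    have "\<forall>z e. 0 < e \<and> e < e0*\<kappa>/2 \<longrightarrow> measure Q (S \<inter> cball z e) \<le> 2 powr (- c' * e powr (- 1 / s))"
    proof (intro allI impI)
      fix z e assume ze: "0 < e \<and> e < e0*\<kappa>/2"
      define A where "A = \<Psi> -` (S \<inter> cball z e) \<inter> space P"
      have "measure Q (S \<inter> cball z e) = measure P A" unfolding Q_def A_def
        by (rule measure_distr[OF PsiM], unfold sets_restrict_space, rule image_eqI[where x="cball z e"]) auto
      also have "\<dots> \<le> 2 powr (- c' * e powr (- 1 / s))"
      proof (cases "A = {}")
        case True then show ?thesis by simp
      next
        case False
        then obtain x0 where x0: "x0 \<in> A" by blast
        have sub: "A \<subseteq> SY \<inter> cball x0 (2*e/\<kappa>)"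
        proof
          fix x assume x: "x \<in> A"
          have xs: "x \<in> SY" "x0 \<in> SY" using x x0 spP A_def by auto
          have d1: "norm (\<Psi> x0 - z) \<le> e" "norm (z - \<Psi> x) \<le> e"
            using x x0 unfolding A_def by (auto simp: dist_norm norm_minus_commute)
          have "\<kappa> * norm (x0 - x) \<le> norm (\<Psi> x0 - \<Psi> x)" using Psi_exp xs by auto
          also have "\<dots> \<le> norm (\<Psi> x0 - z) + norm (z - \<Psi> x)"
            using norm_triangle_ineq[of "\<Psi> x0 - z" "z - \<Psi> x"] by simp
          also have "\<dots> \<le> 2*e" using d1 by simp
          finally have "norm (x0 - x) \<le> 2*e/\<kappa>" using kappa by (simp add: field_simps mult.commute)
          then show "x \<in> SY \<inter> cball x0 (2*e/\<kappa>)" using xs by (simp add: dist_norm)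
        qed
        have "measure P A \<le> measure P (SY \<inter> cball x0 (2*e/\<kappa>))"
          by (rule P.finite_measure_mono[OF sub], unfold setsP sets_restrict_space,
              rule image_eqI[where x="cball x0 (2*e/\<kappa>)"]) auto
        also have "\<dots> \<le> 2 powr (- c * (2*e/\<kappa>) powr (- 1 / s))"
          using ze kappa by (intro gb) (auto simp: field_simps)
        also have "(2*e/\<kappa>) powr (- 1 / s) = (2/\<kappa>) powr (-1/s) * e powr (-1/s)"
          using kappa ze by (simp add: powr_mult[symmetric])
        finally show ?thesis by (simp add: c'_def mult.assoc)
      qed
      finally show "measure Q (S \<inter> cball z e) \<le> 2 powr (- c' * e powr (- 1 / s))" .
    qed
    then show ?thesis using p1 p2 by blast
    qed
  qed
  have le1: "opt_rate S \<le> ereal s0" by (rule opt_rate_le[OF bpQ goQ])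
  have le2: "opt_rate SX \<le> opt_rate S" by (rule opt_rate_mono_lip[OF Phi_lip Phi_img Sne])
  have eq: "opt_rate S = ereal s0" using le1 le2 rates s0 by auto
  show ?thesis using eq rates s0 bpQ goQ unfolding Q_def critical_def by auto
qed

end
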